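(* Let $H$ be an abelian subgroup of $\operatorname{Sym}_n$ such that $(1,2,\dots,n)\notin H$, and let $S=S_n(H)$. (i) If $H_n=\{\mathrm{id}\}$ and $w\in\mathrm{FM}_n$ is such that $\pi(wx_ix_j)\in Sz$ for some $1\leq i,j\leq n$, then $x_ix_j\in A$. (ii) If $H_1=\{\mathrm{id}\}$ and $v\in\mathrm{FM}_n$ is such that $\pi(x_ix_jv)\in zS$ for some $1\leq i,j\leq n$, then $x_ix_j\in\tilde A$.
   Context: $S_n(H)$ is the monoid with presentation $\langle a_1,\dots,a_n \mid a_1\cdots a_n = a_{\sigma(1)}\cdots a_{\sigma(n)},\ \sigma\in H\rangle$, and $z=a_1a_2\cdots a_n\in S$. $\mathrm{FM}_n=\langle x_1,\dots,x_n\rangle$ is the free monoid of rank $n$ and $\pi:\mathrm{FM}_n\to S$ is the monoid morphism with $\pi(x_i)=a_i$. $H_i=\{\sigma\in H\mid\sigma(i)=i\}$. $A=\{x_{\sigma(n-1)}x_{\sigma(n)}\mid\sigma\in H\}$ and $\tilde A=\{x_{\sigma(1)}x_{\sigma(2)}\mid\sigma\in H\}$, subsets of $\mathrm{FM}_n$. *)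

theory Defs
  imports "HOL-Algebra.Sym_Groups"
begin

text \<open>Words of the free monoid FM_n are lists over the alphabet {1..n};
  the letter i stands for the generator x_i.\<close>

definition zword :: "nat \<Rightarrow> nat list" where
  "zword n = [1..<Suc n]"

definition perm_word :: "nat \<Rightarrow> (nat \<Rightarrow> nat) \<Rightarrow> nat list" where
  "perm_word n \<sigma> = map \<sigma> [1..<Suc n]"

text \<open>The congruence on words generated by the defining relations of S_n(H):
  pi(u) = pi(v) iff Sn_eq n H u v.\<close>
inductive Sn_eq :: "nat \<Rightarrow> (nat \<Rightarrow> nat) set \<Rightarrow> nat list \<Rightarrow> nat list \<Rightarrow> bool"
  for n :: nat and H :: "(nat \<Rightarrow> nat) set" where
  rel: "\<sigma> \<in> H \<Longrightarrow> Sn_eq n H (u @ zword n @ v) (u @ perm_word n \<sigma> @ v)"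
| refl: "Sn_eq n H u u"
| sym: "Sn_eq n H u v \<Longrightarrow> Sn_eq n H v u"
| trans: "Sn_eq n H u v \<Longrightarrow> Sn_eq n H v w \<Longrightarrow> Sn_eq n H u w"

definition FM :: "nat \<Rightarrow> nat list set" where
  "FM n = {w. set w \<subseteq> {1..n}}"

definition in_Sz :: "nat \<Rightarrow> (nat \<Rightarrow> nat) set \<Rightarrow> nat list \<Rightarrow> bool" where
  "in_Sz n H w \<longleftrightarrow> (\<exists>u \<in> FM n. Sn_eq n H w (u @ zword n))"

definition in_zS :: "nat \<Rightarrow> (nat \<Rightarrow> nat) set \<Rightarrow> nat list \<Rightarrow> bool" where
  "in_zS n H w \<longleftrightarrow> (\<exists>u \<in> FM n. Sn_eq n H w (zword n @ u))"

definition long_cycle :: "nat \<Rightarrow> nat \<Rightarrow> nat" where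
  "long_cycle n i = (if 1 \<le> i \<and> i < n then i + 1 else if i = n then 1 else i)"

definition stab :: "(nat \<Rightarrow> nat) set \<Rightarrow> nat \<Rightarrow> (nat \<Rightarrow> nat) set" where
  "stab H i = {\<sigma> \<in> H. \<sigma> i = i}"

definition setA :: "nat \<Rightarrow> (nat \<Rightarrow> nat) set \<Rightarrow> nat list set" where
  "setA n H = {[\<sigma> (n - 1), \<sigma> n] | \<sigma>. \<sigma> \<in> H}"

definition setA_tilde :: "(nat \<Rightarrow> nat) set \<Rightarrow> nat list set" where
  "setA_tilde H = {[\<sigma> 1, \<sigma> 2] | \<sigma>. \<sigma> \<in> H}"

end

theory Submission
  imports Defs
begin


lemma EU:
  fixes w :: "nat \<Rightarrow> 'b"
  shows "1 \<le> g \<Longrightarrow> 1 \<le> k \<Longrightarrow> (\<forall>s<k. w s = w (s+g)) \<Longrightarrow>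
    (\<forall>s. 1 \<le> s \<longrightarrow> s < g \<longrightarrow> w s = w (s+k)) \<Longrightarrow> w 0 = w k"
proof (induction "g+k" arbitrary: g k rule: less_induct)
  case less
  show ?case
  proof (cases "k = g")
    case True
    then show ?thesis using less.prems(2,3) by (metis add_0 less_numeral_extra(1) less_le_trans)
  next
    case False
    show ?thesis
    proof (cases "k < g")
      case True
      have h1: "\<forall>s<k. w s = w (s + (g-k))"
      proof (intro allI impI)
        fix s assume "s < k"
        have "w (s + (g-k)) = w (s + (g-k) + k)" using less.prems(4) True \<open>s<k\<close> by auto
        also have "\<dots> = w (s+g)" using True by simp
        finally show "w s = w (s + (g-k))" using less.prems(3) \<open>s<k\<close> by simp
      qed
      have h2: "\<forall>s. 1 \<le> s \<longrightarrow> s < g-k \<longrightarrow> w s = w (s+k)" using less.prems(4) by auto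
      show ?thesis using less.hyps[of "g-k" k] True h1 h2 less.prems(2) by simp
    next
      case False
      hence kg: "g < k" using \<open>k \<noteq> g\<close> by simp
      have h1: "\<forall>s<k-g. w s = w (s+g)" using less.prems(3) by auto
      have h2: "\<forall>s. 1 \<le> s \<longrightarrow> s < g \<longrightarrow> w s = w (s+(k-g))"
      proof (intro allI impI)
        fix s assume "1 \<le> s" "s < g"
        have "w (s + (k-g)) = w (s+(k-g)+g)" using less.prems(3) \<open>s<g\<close> kg by auto
        also have "\<dots> = w (s+k)" using kg by simp
        finally show "w s = w (s+(k-g))" using less.prems(4) \<open>1 \<le> s\<close> \<open>s<g\<close> by simp
      qed
      have "w 0 = w (k-g)" using less.hyps[of g "k-g"] kg h1 h2 less.prems(1) by simp
      also have "\<dots> = w k" using less.prems(3)[rule_format, of "k-g"] kg less.prems(1) by simp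
      finally show ?thesis .
    qed
  qed
qed

definition isper :: "(nat \<Rightarrow> 'b) \<Rightarrow> nat \<Rightarrow> nat \<Rightarrow> bool" where
  "isper d m e \<longleftrightarrow> 1 \<le> e \<and> e \<le> Suc m \<and> (\<forall>j. j + e < m \<longrightarrow> d j = d (j+e))"

definition blk :: "(nat \<Rightarrow> 'b) \<Rightarrow> nat \<Rightarrow> (nat \<Rightarrow> 'b) \<Rightarrow> nat \<Rightarrow> nat \<Rightarrow> bool" where
  "blk d m \<delta> x y \<longleftrightarrow> x < y \<and> isper d m (y - x) \<and> (\<forall>p. x < p \<longrightarrow> p < y \<longrightarrow> \<delta> p = d (m - (y - p)))"

lemma DD:
  assumes b1: "blk d m \<delta> x y1" and b2: "blk d m \<delta> x y2" and lt: "y1 < y2"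
  shows "blk d m \<delta> y1 y2"
proof -
  define g where "g = y1 - x"
  define h where "h = y2 - x"
  define k where "k = y2 - y1"
  have xy1: "x < y1" and pg: "isper d m g" and B1: "\<forall>p. x < p \<longrightarrow> p < y1 \<longrightarrow> \<delta> p = d (m - (y1 - p))"
    using b1 unfolding blk_def g_def by blast+
  have ph: "isper d m h" and B2: "\<forall>p. x < p \<longrightarrow> p < y2 \<longrightarrow> \<delta> p = d (m - (y2 - p))"
    using b2 unfolding blk_def h_def by blast+
  have hk: "h = g + k" "1 \<le> g" "1 \<le> k" using xy1 lt unfolding g_def h_def k_def by auto
  have hm: "h \<le> Suc m" using ph unfolding isper_def by blast
  have pg': "\<forall>j. j + g < m \<longrightarrow> d j = d (j+g)" using pg unfolding isper_def by blast
  have ph': "\<forall>j. j + h < m \<longrightarrow> d j = d (j+h)" using ph unfolding isper_def by blast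
  have B: "\<forall>t. 1 \<le> t \<longrightarrow> t < g \<longrightarrow> d (m + t - h) = d (m + t - h + k)"
  proof (intro allI impI)
    fix t assume t: "1 \<le> t" "t < g"
    have xt: "x < x + t" "x + t < y1" "x + t < y2" using t lt unfolding g_def by linarith+
    have "\<delta> (x+t) = d (m - (y1 - (x+t)))" using B1 xt by blast
    moreover have "\<delta> (x+t) = d (m - (y2 - (x+t)))" using B2 xt by blast
    moreover have "m - (y1 - (x+t)) = m + t - h + k" using t hm hk unfolding g_def h_def k_def by linarith
    moreover have "m - (y2 - (x+t)) = m + t - h" using t hm hk unfolding g_def h_def k_def by linarith
    ultimately show "d (m + t - h) = d (m + t - h + k)" by simp
  qed
  have per: "\<forall>j. j + k < m \<longrightarrow> d j = d (j+k)"
  proof (intro allI impI)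
    fix j assume jk: "j + k < m"
    consider "j + h < m" | "j + h = m" | "j + h > m" by linarith
    then show "d j = d (j+k)"
    proof cases
      case 1
      have "d (j+k) = d (j+k+g)" using pg' 1 hk by (metis add.assoc add.commute)
      also have "\<dots> = d j" using ph' 1 hk by (metis add.assoc add.commute)
      finally show ?thesis by simp
    next
      case 2
      define w where "w s = d (j+s)" for s
      have "w 0 = w k"
      proof (rule EU[of g k])
        show "1 \<le> g" "1 \<le> k" using hk by auto
        show "\<forall>s<k. w s = w (s+g)"
        proof (intro allI impI)
          fix s assume "s < k"
          hence "j + s + g < m" using 2 hk by linarith
          thus "w s = w (s+g)" using pg' unfolding w_def by (metis add.assoc)
        qed
        show "\<forall>s. 1 \<le> s \<longrightarrow> s < g \<longrightarrow> w s = w (s+k)"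
        proof (intro allI impI)
          fix s assume s: "1 \<le> s" "s < g"
          have "j + s = m + s - h" using 2 by linarith
          thus "w s = w (s+k)" using B s unfolding w_def by (metis add.assoc)
        qed
      qed
      then show ?thesis unfolding w_def by simp
    next
      case 3
      define t where "t = j + h - m"
      have t: "1 \<le> t" "t < g" "j = m + t - h" using 3 jk hk unfolding t_def by linarith+
      then show ?thesis using B by auto
    qed
  qed
  have "isper d m k" unfolding isper_def using per hk hm by simp
  moreover have "\<forall>p. y1 < p \<longrightarrow> p < y2 \<longrightarrow> \<delta> p = d (m - (y2 - p))" using B2 xy1 by auto
  ultimately show ?thesis unfolding blk_def k_def using lt by blast
qed


inductive chn :: "(nat \<Rightarrow> 'b) \<Rightarrow> nat \<Rightarrow> (nat \<Rightarrow> 'b) \<Rightarrow> nat \<Rightarrow> nat \<Rightarrow> bool"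
  for d m \<delta> where
  chn_refl: "chn d m \<delta> x x"
| chn_step: "blk d m \<delta> x z \<Longrightarrow> chn d m \<delta> z y \<Longrightarrow> chn d m \<delta> x y"

definition danger :: "(nat \<Rightarrow> 'b) \<Rightarrow> nat \<Rightarrow> (nat \<Rightarrow> 'b) \<Rightarrow> nat \<Rightarrow> bool" where
  "danger d m \<delta> N \<longleftrightarrow> (\<exists>r. Suc m \<le> r \<and> blk d m \<delta> (r - Suc m) r \<and> chn d m \<delta> r N)"

lemma chn_le: "chn d m \<delta> x y \<Longrightarrow> x \<le> y"
  by (induction rule: chn.induct) (auto simp: blk_def)

lemma blk_gap2: "\<not> isper d m 1 \<Longrightarrow> blk d m \<delta> x y \<Longrightarrow> x + 2 \<le> y"
proof -
  assume nc: "\<not> isper d m 1" and b: "blk d m \<delta> x y"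
  have "x < y" "isper d m (y-x)" using b unfolding blk_def by auto
  moreover have "y - x \<noteq> 1" using nc \<open>isper d m (y-x)\<close> by auto
  ultimately show ?thesis by linarith
qed

lemma blk_cong: "blk d m \<delta> x y \<Longrightarrow> (\<forall>p. x < p \<longrightarrow> p < y \<longrightarrow> \<delta>' p = \<delta> p) \<Longrightarrow> blk d m \<delta>' x y"
  unfolding blk_def by auto

lemma chn_E: "chn d m \<delta> x y \<Longrightarrow> (y = x \<Longrightarrow> P) \<Longrightarrow> (\<And>z. blk d m \<delta> x z \<Longrightarrow> chn d m \<delta> z y \<Longrightarrow> P) \<Longrightarrow> P"
  by (erule chn.cases) auto

lemma chn_cong: "chn d m \<delta> x y \<Longrightarrow> (\<forall>p. x < p \<longrightarrow> \<delta>' p = \<delta> p) \<Longrightarrow> chn d m \<delta>' x y"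
proof (induction rule: chn.induct)
  case (chn_refl x) show ?case by (rule chn.chn_refl)
next
  case (chn_step x z y)
  have "x < z" using chn_step.hyps(1) unfolding blk_def by auto
  hence "\<forall>p. z < p \<longrightarrow> \<delta>' p = \<delta> p" using chn_step.prems by auto
  hence c: "chn d m \<delta>' z y" using chn_step.IH by blast
  have "blk d m \<delta>' x z" using blk_cong[OF chn_step.hyps(1)] chn_step.prems by auto
  then show ?case using c by (rule chn.chn_step)
qed

lemma CL:
  assumes nc: "\<not> isper d m 1"
  shows "chn d m \<delta> x y \<Longrightarrow> chn d m \<delta> x z \<Longrightarrow> y \<le> Suc z \<Longrightarrow> y \<le> z \<and> chn d m \<delta> y z"
proof (induction "(y - x) + (z - x)" arbitrary: x y z rule: less_induct)
  case less
  show ?case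
  proof (rule chn_E[OF less.prems(1)])
    assume "y = x"
    then show ?thesis using less.prems(2) chn_le by blast
  next
    fix x1 assume bx1: "blk d m \<delta> x x1" and cx1: "chn d m \<delta> x1 y"
    have x1: "x + 2 \<le> x1" using blk_gap2[OF nc bx1] .
    have x1y: "x1 \<le> y" using chn_le[OF cx1] .
    show ?thesis
    proof (rule chn_E[OF less.prems(2)])
      assume "z = x"
      then show ?thesis using x1 x1y less.prems(3) by linarith
    next
      fix z1 assume bz1: "blk d m \<delta> x z1" and cz1: "chn d m \<delta> z1 z"
      have z1: "x + 2 \<le> z1" using blk_gap2[OF nc bz1] .
      have z1z: "z1 \<le> z" using chn_le[OF cz1] .
      consider "x1 = z1" | "x1 < z1" | "z1 < x1" by linarith
      then show ?thesis
      proof cases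
        case 1
        have "(y - x1) + (z - x1) < (y - x) + (z - x)" using x1 x1y z1z 1 by linarith
        then show ?thesis using less.hyps[where x=x1 and y=y and z=z] cx1 cz1 less.prems(3) 1 by blast
      next
        case 2
        have "blk d m \<delta> x1 z1" using DD[OF bx1 bz1 2] .
        hence "chn d m \<delta> x1 z" using cz1 chn_step by metis
        moreover have "(y - x1) + (z - x1) < (y - x) + (z - x)" using x1 x1y z1z 2 by linarith
        ultimately show ?thesis using less.hyps[where x=x1 and y=y and z=z] cx1 less.prems(3) by blast
      next
        case 3
        have "blk d m \<delta> z1 x1" using DD[OF bz1 bx1 3] .
        hence "chn d m \<delta> z1 y" using cx1 chn_step by metis
        moreover have "(y - z1) + (z - z1) < (y - x) + (z - x)" using z1 x1y z1z 3 by linarith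
        ultimately show ?thesis using less.hyps[where x=z1 and y=y and z=z] cz1 less.prems(3) by blast
      qed
    qed
  qed
qed

lemma LP:
  assumes nc: "\<not> isper d m 1"
  shows "chn d m \<delta> x y \<Longrightarrow> blk d m \<delta> a (a + Suc m) \<Longrightarrow> x \<le> a \<Longrightarrow> a + Suc m \<le> Suc y
     \<Longrightarrow> a + Suc m \<le> y \<and> chn d m \<delta> (a + Suc m) y"
proof (induction rule: chn.induct)
  case (chn_refl x)
  have "isper d m 1" if "m \<le> 1" using that unfolding isper_def by auto
  with nc have "2 \<le> m" by linarith
  then show ?case using chn_refl.prems by linarith
next
  case (chn_step x x1 y)
  show ?case
  proof (cases "x1 \<le> a")
    case True
    then show ?thesis using chn_step by blast
  next
    case False
    hence x1a: "a < x1" by simp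
    define r where "r = a + Suc m"
    have cxr: "chn d m \<delta> x r"
    proof (cases "x = a")
      case True
      then show ?thesis using chn_step.prems(1) chn.chn_step chn.chn_refl unfolding r_def by metis
    next
      case False
      hence xa: "x < a" using chn_step.prems(2) by linarith
      have xx1: "x < x1" and px1: "isper d m (x1 - x)" and B1: "\<forall>p. x < p \<longrightarrow> p < x1 \<longrightarrow> \<delta> p = d (m - (x1 - p))"
        using chn_step.hyps(1) unfolding blk_def by blast+
      have x1le: "x1 - x \<le> Suc m" using px1 unfolding isper_def by blast
      have Br: "\<forall>p. a < p \<longrightarrow> p < r \<longrightarrow> \<delta> p = d (m - (r - p))"
        using chn_step.prems(1) unfolding blk_def r_def by blast
      have x1r: "x1 < r" using x1le xa unfolding r_def by linarith
      have per: "isper d m (r - x1)"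
        unfolding isper_def
      proof (intro conjI allI impI)
        show "1 \<le> r - x1" using x1r by linarith
        show "r - x1 \<le> Suc m" unfolding r_def using x1a by linarith
        fix j assume j: "j + (r - x1) < m"
        define p where "p = a + 1 + j"
        have pp: "a < p" "p < x1" "x < p" "p < r" using j xa x1r x1a unfolding p_def r_def by linarith+
        have "\<delta> p = d (m - (x1 - p))" using B1 pp by blast
        moreover have "\<delta> p = d (m - (r - p))" using Br pp by blast
        moreover have "m - (x1 - p) = j + (r - x1)" using j pp x1le xa unfolding p_def r_def by linarith
        moreover have "m - (r - p) = j" using j x1r unfolding p_def r_def by linarith
        ultimately show "d j = d (j + (r - x1))" by simp
      qed
      have "blk d m \<delta> x1 r" unfolding blk_def using per x1r Br x1a by auto
      then show ?thesis using chn_step.hyps(1) chn.chn_step chn.chn_refl by metis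
    qed
    have "chn d m \<delta> x y" using chn_step.hyps chn.chn_step by metis
    then show ?thesis using CL[OF nc cxr] chn_step.prems(3) unfolding r_def by blast
  qed
qed

lemma CLO:
  assumes nc: "\<not> isper d m 1"
    and occ: "blk d m \<delta> a (a + Suc m)"
    and ch: "\<forall>p. p \<noteq> a \<longrightarrow> p \<noteq> a + Suc m \<longrightarrow> \<delta>' p = \<delta> p"
    and aN: "a + Suc m \<le> Suc N"
    and dg: "danger d m \<delta>' N"
  shows "danger d m \<delta> N"
proof -
  define r0 where "r0 = a + Suc m"
  obtain r where r: "Suc m \<le> r" "blk d m \<delta>' (r - Suc m) r" "chn d m \<delta>' r N"
    using dg unfolding danger_def by blast
  define x where "x = r - Suc m"
  have occ': "blk d m \<delta>' a r0" using blk_cong[OF occ, of \<delta>'] ch unfolding r0_def by force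
  have cxN: "chn d m \<delta>' x N" using r chn_step unfolding x_def by metis
  have rx: "r = x + Suc m" using r(1) unfolding x_def by simp
  show ?thesis
  proof (cases "x \<le> a")
    case True
    have "r0 \<le> N \<and> chn d m \<delta>' r0 N" using LP[OF nc cxN _ True] occ' aN unfolding r0_def by blast
    moreover have "\<forall>p. r0 < p \<longrightarrow> \<delta> p = \<delta>' p" using ch unfolding r0_def by simp
    ultimately have c0: "chn d m \<delta> r0 N" using chn_cong[of d m \<delta>' r0 N \<delta>] by auto
    have "Suc m \<le> r0" "r0 - Suc m = a" unfolding r0_def by auto
    with c0 show ?thesis unfolding danger_def using occ unfolding r0_def by metis
  next
    case False
    show ?thesis
    proof (cases "r0 \<le> x")
      case True
      have "\<forall>p. x < p \<longrightarrow> \<delta> p = \<delta>' p" using ch True unfolding r0_def by simp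
      hence "blk d m \<delta> x r" "chn d m \<delta> r N" using blk_cong[of d m \<delta>' x r \<delta>] r(2,3) chn_cong[of d m \<delta>' r N \<delta>] rx
        unfolding x_def by auto
      then show ?thesis unfolding danger_def x_def using r(1) by blast
    next
      case False2: False
      have ax: "a < x" "x < r0" using False False2 by linarith+
      have Bo: "\<forall>p. a < p \<longrightarrow> p < r0 \<longrightarrow> \<delta>' p = d (m - (r0 - p))" using occ' unfolding blk_def by blast
      have Br: "\<forall>p. x < p \<longrightarrow> p < r \<longrightarrow> \<delta>' p = d (m - (r - p))" using r(2) unfolding blk_def x_def by blast
      have per: "isper d m (r - r0)"
        unfolding isper_def
      proof (intro conjI allI impI)
        show "1 \<le> r - r0" using ax rx unfolding r0_def by linarith
        show "r - r0 \<le> Suc m" using ax rx unfolding r0_def by linarith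
        fix j assume j: "j + (r - r0) < m"
        define p where "p = x + 1 + j"
        have pp: "a < p" "p < r0" "x < p" "p < r" using j ax rx unfolding p_def r0_def by linarith+
        have "\<delta>' p = d (m - (r0 - p))" using Bo pp by blast
        moreover have "\<delta>' p = d (m - (r - p))" using Br pp by blast
        moreover have "m - (r0 - p) = j + (r - r0)" using j pp rx ax unfolding p_def r0_def by linarith
        moreover have "m - (r - p) = j" using rx j ax unfolding p_def r0_def by linarith
        ultimately show "d j = d (j + (r - r0))" by simp
      qed
      have "\<forall>p. r0 < p \<longrightarrow> p < r \<longrightarrow> \<delta> p = d (m - (r - p))"
      proof (intro allI impI)
        fix p assume p: "r0 < p" "p < r"
        have "p \<noteq> a" "p \<noteq> a + Suc m" using p ax unfolding r0_def by linarith+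
        hence "\<delta> p = \<delta>' p" using ch by simp
        also have "\<delta>' p = d (m - (r - p))" using Br p ax by simp
        finally show "\<delta> p = d (m - (r - p))" .
      qed
      moreover have "r0 < r" using ax rx unfolding r0_def by linarith
      ultimately have b2: "blk d m \<delta> r0 r" unfolding blk_def using per by blast
      have "\<forall>p. r < p \<longrightarrow> \<delta> p = \<delta>' p" using ch ax rx unfolding r0_def by simp
      hence "chn d m \<delta> r N" using chn_cong[of d m \<delta>' r N \<delta>] r(3) by auto
      hence "chn d m \<delta> r0 N" using b2 chn_step by metis
      moreover have "Suc m \<le> r0" "r0 - Suc m = a" unfolding r0_def by auto
    ultimately show ?thesis unfolding danger_def using occ unfolding r0_def by metis
    qed
  qed
qed

lemma INIT:
  assumes nc: "\<not> isper d m 1" and occ: "blk d m \<delta> (N - m) (Suc N)" and Nm: "m \<le> N"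
  shows "\<not> danger d m \<delta> N"
proof
  assume "danger d m \<delta> N"
  then obtain r where r: "Suc m \<le> r" "blk d m \<delta> (r - Suc m) r" "chn d m \<delta> r N"
    unfolding danger_def by blast
  have "chn d m \<delta> (r - Suc m) N" using r chn_step by metis
  moreover have "r \<le> N" using chn_le[OF r(3)] .
  moreover have "r - Suc m \<le> N - m" using \<open>r \<le> N\<close> by linarith
  moreover have "N - m + Suc m = Suc N" using Nm by linarith
  ultimately have "Suc N \<le> N" using LP[OF nc, of \<delta> "r - Suc m" N "N - m"] occ by simp
  then show False by simp
qed

lemma NOEND:
  assumes "blk d m \<delta> (N - Suc m) N" "Suc m \<le> N"
  shows "danger d m \<delta> N"
  unfolding danger_def using assms chn_refl by blast



definition gp :: "nat \<Rightarrow> (nat\<Rightarrow>nat) set \<Rightarrow> bool" where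
  "gp n H \<longleftrightarrow> (\<forall>\<sigma>\<in>H. \<sigma> permutes {1..n}) \<and> id \<in> H \<and> (\<forall>\<sigma>\<in>H. \<forall>\<tau>\<in>H. \<sigma>\<circ>\<tau> \<in> H)
     \<and> (\<forall>\<sigma>\<in>H. \<exists>\<sigma>'\<in>H. \<sigma>'\<circ>\<sigma> = id) \<and> (\<forall>\<sigma>\<in>H. \<forall>\<tau>\<in>H. \<sigma>\<circ>\<tau> = \<tau>\<circ>\<sigma>)"

definition porb :: "(nat \<Rightarrow> nat) set \<Rightarrow> nat \<Rightarrow> nat \<Rightarrow> (nat \<times> nat) set" where
  "porb H a b = {(\<tau> a, \<tau> b) | \<tau>. \<tau> \<in> H}"

definition dl :: "(nat \<Rightarrow> nat) set \<Rightarrow> nat list \<Rightarrow> nat \<Rightarrow> (nat \<times> nat) set option" where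
  "dl H W p = (if 1 \<le> p \<and> p < length W then Some (porb H (W!(p-1)) (W!p)) else None)"

definition pat :: "(nat \<Rightarrow> nat) set \<Rightarrow> nat \<Rightarrow> (nat \<times> nat) set option" where
  "pat H j = Some (porb H (j+1) (j+2))"

lemma porb_inv:
  assumes g: "gp n H" and s: "\<sigma> \<in> H"
  shows "porb H (\<sigma> a) (\<sigma> b) = porb H a b"
proof
  show "porb H (\<sigma> a) (\<sigma> b) \<subseteq> porb H a b"
  proof
    fix x assume "x \<in> porb H (\<sigma> a) (\<sigma> b)"
    then obtain \<tau> where t: "\<tau> \<in> H" "x = (\<tau> (\<sigma> a), \<tau> (\<sigma> b))" unfolding porb_def by blast
    have "\<tau> \<circ> \<sigma> \<in> H" using g s t unfolding gp_def by blast
    moreover have "x = ((\<tau> \<circ> \<sigma>) a, (\<tau> \<circ> \<sigma>) b)" using t by simp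
    ultimately show "x \<in> porb H a b" unfolding porb_def by blast
  qed
next
  show "porb H a b \<subseteq> porb H (\<sigma> a) (\<sigma> b)"
  proof
    fix x assume "x \<in> porb H a b"
    then obtain \<tau> where t: "\<tau> \<in> H" "x = (\<tau> a, \<tau> b)" unfolding porb_def by blast
    obtain \<sigma>' where s': "\<sigma>' \<in> H" "\<sigma>' \<circ> \<sigma> = id" using g s unfolding gp_def by blast
    have "\<tau> \<circ> \<sigma>' \<in> H" using g s' t unfolding gp_def by blast
    moreover have "\<sigma>' (\<sigma> c) = c" for c using s'(2) by (metis comp_apply id_apply)
    ultimately show "x \<in> porb H (\<sigma> a) (\<sigma> b)" unfolding porb_def using t
      by (metis (mono_tags, lifting) comp_apply mem_Collect_eq)
  qed
qed

lemma perm_word_len [simp]: "length (perm_word n \<sigma>) = n"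
  unfolding perm_word_def by simp

lemma perm_word_nth: "i < n \<Longrightarrow> perm_word n \<sigma> ! i = \<sigma> (Suc i)"
  unfolding perm_word_def by (simp del: upt_Suc)

lemma nth_mid:
  assumes "length u \<le> q" "q < length u + length X"
  shows "(u @ X @ v) ! q = X ! (q - length u)"
proof -
  have k: "q - length u < length X" "\<not> q < length u" using assms by linarith+
  have "(u @ X @ v) ! q = (X @ v) ! (q - length u)" using k by (simp add: nth_append)
  also have "\<dots> = X ! (q - length u)" using k by (simp add: nth_append)
  finally show ?thesis .
qed

lemma nth_right:
  assumes "length u + length X \<le> q"
  shows "(u @ X @ v) ! q = v ! (q - length u - length X)"
proof -
  have k: "\<not> q - length u < length X" "\<not> q < length u" using assms by linarith+
  then show ?thesis by (simp add: nth_append)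
qed

lemma win_nth:
  assumes "length u < p" "p < length u + n"
  shows "(u @ perm_word n \<sigma> @ v) ! (p - 1) = \<sigma> (p - length u)"
    and "(u @ perm_word n \<sigma> @ v) ! p = \<sigma> (Suc (p - length u))"
proof -
  have "(u @ perm_word n \<sigma> @ v) ! (p - 1) = perm_word n \<sigma> ! (p - 1 - length u)"
    using assms by (intro nth_mid) auto
  also have "\<dots> = \<sigma> (Suc (p - 1 - length u))" using assms by (intro perm_word_nth) linarith
  also have "Suc (p - 1 - length u) = p - length u" using assms by linarith
  finally show "(u @ perm_word n \<sigma> @ v) ! (p - 1) = \<sigma> (p - length u)" .
  have "(u @ perm_word n \<sigma> @ v) ! p = perm_word n \<sigma> ! (p - length u)"
    using assms by (intro nth_mid) auto
  also have "\<dots> = \<sigma> (Suc (p - length u))" using assms by (simp add: perm_word_nth)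
  finally show "(u @ perm_word n \<sigma> @ v) ! p = \<sigma> (Suc (p - length u))" .
qed

lemma dl_win:
  assumes g: "gp n H" and s: "\<sigma> \<in> H" and p: "length u < p" "p < length u + n"
  shows "dl H (u @ perm_word n \<sigma> @ v) p = Some (porb H (p - length u) (Suc (p - length u)))"
proof -
  have "1 \<le> p" "p < length (u @ perm_word n \<sigma> @ v)" using p by auto
  then show ?thesis unfolding dl_def using win_nth[OF p, of \<sigma> v] porb_inv[OF g s] by simp
qed

lemma win_blk:
  assumes g: "gp n H" and s: "\<sigma> \<in> H" and n: "1 \<le> n"
  shows "blk (pat H) (n-1) (dl H (u @ perm_word n \<sigma> @ v)) (length u) (length u + n)"
  unfolding blk_def
proof (intro conjI allI impI)
  show "length u < length u + n" using n by simp
  show "isper (pat H) (n - 1) (length u + n - length u)" unfolding isper_def using n by auto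
  fix p assume p: "length u < p" "p < length u + n"
  have e: "n - 1 - (length u + n - p) = p - length u - 1" using p by linarith
  have "pat H (n - 1 - (length u + n - p)) = Some (porb H (p - length u) (Suc (p - length u)))"
    unfolding pat_def e using p by (simp add: Suc_diff_Suc numeral_2_eq_2)
  then show "dl H (u @ perm_word n \<sigma> @ v) p = pat H (n - 1 - (length u + n - p))"
    using dl_win[OF g s p] by simp
qed

lemma win_chg:
  assumes g: "gp n H" and s: "\<sigma> \<in> H" and t: "\<tau> \<in> H"
    and p: "p \<noteq> length u" "p \<noteq> length u + n"
  shows "dl H (u @ perm_word n \<tau> @ v) p = dl H (u @ perm_word n \<sigma> @ v) p"
proof -
  consider "p < length u" | "length u < p \<and> p < length u + n" | "length u + n < p" using p by linarith
  then show ?thesis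
  proof cases
    case 1
    then show ?thesis unfolding dl_def by (auto simp: nth_append)
  next
    case 2
    then show ?thesis using dl_win[OF g s] dl_win[OF g t] by simp
  next
    case 3
    have "(u @ perm_word n \<tau> @ v) ! q = (u @ perm_word n \<sigma> @ v) ! q" if "length u + n \<le> q" for q
      using that nth_right[of u "perm_word n \<tau>" q v] nth_right[of u "perm_word n \<sigma>" q v] by simp
    moreover have "length u + n \<le> p - 1" "length u + n \<le> p" using 3 by linarith+
    ultimately show ?thesis unfolding dl_def by simp
  qed
qed



lemma nonconst:
  assumes g: "gp n H" and lc: "long_cycle n \<notin> H" and n3: "3 \<le> n"
  shows "\<not> isper (pat H) (n-1) 1"
proof
  assume ip: "isper (pat H) (n-1) 1"
  have eq: "\<forall>j. j + 1 < n - 1 \<longrightarrow> porb H (j+1) (j+2) = porb H (j+2) (j+3)"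
    using ip unfolding isper_def pat_def by (auto simp: numeral_3_eq_3 numeral_2_eq_2)
  have all: "porb H (j+1) (j+2) = porb H 1 2" if "j < n - 1" for j
    using that
  proof (induction j)
    case 0 then show ?case by (simp add: numeral_2_eq_2)
  next
    case (Suc j)
    have "porb H (j+2) (j+3) = porb H (j+1) (j+2)" using eq Suc.prems by simp
    then show ?case using Suc by (simp add: numeral_3_eq_3 numeral_2_eq_2)
  qed
  have idH: "id \<in> H" using g unfolding gp_def by blast
  have ex: "\<exists>\<tau>\<in>H. \<tau> 1 = i \<and> \<tau> 2 = Suc i" if "1 \<le> i" "i < n" for i
  proof -
    have "(id i, id (Suc i)) \<in> porb H i (Suc i)" unfolding porb_def using idH by blast
    hence "(i, Suc i) \<in> porb H i (Suc i)" by simp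
    moreover have "porb H i (Suc i) = porb H 1 2" using all[of "i - 1"] that
      by (simp add: numeral_2_eq_2)
    ultimately show ?thesis unfolding porb_def by auto
  qed
  obtain c where c: "c \<in> H" "c 1 = 2" "c 2 = 3" using ex[of 2] n3 by (auto simp: numeral_3_eq_3 numeral_2_eq_2)
  have ci: "c i = Suc i" if i1: "1 \<le> i" "i < n" for i
  proof -
    obtain \<tau> where t: "\<tau> \<in> H" "\<tau> 1 = i" "\<tau> 2 = Suc i" using ex i1 by blast
    have "c \<circ> \<tau> = \<tau> \<circ> c" using g c(1) t(1) unfolding gp_def by blast
    hence "c (\<tau> 1) = \<tau> (c 1)" by (metis comp_apply)
    then show ?thesis using t c by simp
  qed
  have cp: "c permutes {1..n}" using g c(1) unfolding gp_def by blast
  have cn: "c n = 1"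
  proof -
    have "c n \<in> {1..n}" using cp n3 permutes_in_image by fastforce
    moreover have "c n \<noteq> Suc i" if "1 \<le> i" "i < n" for i
    proof
      assume "c n = Suc i"
      hence "c n = c i" using ci that by simp
      hence "n = i" using permutes_inj[OF cp] by (meson injD)
      then show False using that by simp
    qed
    ultimately show ?thesis
    proof -
      assume a1: "c n \<in> {1..n}" and a2: "\<And>i. 1 \<le> i \<Longrightarrow> i < n \<Longrightarrow> c n \<noteq> Suc i"
      show "c n = 1"
      proof (rule ccontr)
        assume "c n \<noteq> 1"
        hence "1 \<le> c n - 1" "c n - 1 < n" "c n = Suc (c n - 1)" using a1 by auto
        then show False using a2 by blast
      qed
    qed
  qed
  have "c = long_cycle n"
  proof
    fix i
    show "c i = long_cycle n i"
    proof (cases "i \<in> {1..n}")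
      case True
      show ?thesis
      proof (cases "i < n")
        case True2: True
        then show ?thesis using True ci[of i] unfolding long_cycle_def by auto
      next
        case False2: False
        hence "i = n" using True by auto
        then show ?thesis using cn n3 unfolding long_cycle_def by auto
      qed
    next
      case False
      then show ?thesis unfolding long_cycle_def using permutes_not_in[OF cp False] n3 by auto
    qed
  qed
  then show False using lc c(1) by simp
qed

definition step :: "nat \<Rightarrow> (nat \<Rightarrow> nat) set \<Rightarrow> nat list \<Rightarrow> nat list \<Rightarrow> bool" where
  "step n H u v \<longleftrightarrow> (\<exists>x y \<sigma> \<tau>. \<sigma> \<in> H \<and> \<tau> \<in> H \<and> u = x @ perm_word n \<sigma> @ y \<and> v = x @ perm_word n \<tau> @ y)"

lemma step_sym: "step n H u v \<Longrightarrow> step n H v u"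
  unfolding step_def by blast

lemma steps_sym: "(step n H)\<^sup>*\<^sup>* u v \<Longrightarrow> (step n H)\<^sup>*\<^sup>* v u"
proof (induction rule: rtranclp_induct)
  case base then show ?case by simp
next
  case (step y z)
  then show ?case using step_sym converse_rtranclp_into_rtranclp by metis
qed

lemma zword_perm: "zword n = perm_word n id"
  unfolding zword_def perm_word_def by simp

lemma Sn_eq_steps:
  assumes idH: "id \<in> H"
  shows "Sn_eq n H u v \<Longrightarrow> (step n H)\<^sup>*\<^sup>* u v"
proof (induction rule: Sn_eq.induct)
  case (rel \<sigma> u v)
  have "step n H (u @ zword n @ v) (u @ perm_word n \<sigma> @ v)"
    unfolding step_def zword_perm using rel idH by blast
  then show ?case by simp
next
  case (refl u) then show ?case by simp
next
  case (sym u v) then show ?case using steps_sym by metis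
next
  case (trans u v w) then show ?case by simp
qed

lemma perm_word_split:
  assumes "2 \<le> n"
  shows "perm_word n \<sigma> = map \<sigma> [1..<n-1] @ [\<sigma> (n-1), \<sigma> n]"
proof -
  obtain k where k: "n = Suc (Suc k)" using assms by (metis add_2_eq_Suc le_Suc_ex)
  show ?thesis unfolding perm_word_def k by simp
qed

lemma last2_perm:
  assumes "2 \<le> n"
  shows "drop (length (x @ perm_word n \<sigma>) - 2) (x @ perm_word n \<sigma>) = [\<sigma> (n-1), \<sigma> n]"
proof -
  have e: "x @ perm_word n \<sigma> = (x @ map \<sigma> [1..<n-1]) @ [\<sigma> (n-1), \<sigma> n]"
    using perm_word_split[OF assms] by simp
  show ?thesis unfolding e by simp
qed



definition Inv :: "nat \<Rightarrow> (nat \<Rightarrow> nat) set \<Rightarrow> nat list \<Rightarrow> bool" where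
  "Inv n H W \<longleftrightarrow> n \<le> length W \<and> \<not> danger (pat H) (n-1) (dl H W) (length W - 1)
     \<and> (\<exists>\<sigma>\<in>H. drop (length W - 2) W = [\<sigma> (n-1), \<sigma> n])"

lemma Inv_init:
  assumes g: "gp n H" and lc: "long_cycle n \<notin> H" and n3: "3 \<le> n"
  shows "Inv n H (u @ zword n)"
proof -
  have idH: "id \<in> H" using g unfolding gp_def by blast
  have nc: "\<not> isper (pat H) (n-1) 1" using nonconst[OF g lc n3] .
  have W: "u @ zword n = u @ perm_word n id @ []" by (simp add: zword_perm)
  have b: "blk (pat H) (n-1) (dl H (u @ zword n)) (length u) (length u + n)"
    using win_blk[OF g idH, of u "[]"] n3 W by simp
  define N where "N = length (u @ zword n) - 1"
  have N: "N - (n-1) = length u" "Suc N = length u + n" "n - 1 \<le> N"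
    unfolding N_def using n3 by (auto simp: zword_perm)
  have "\<not> danger (pat H) (n-1) (dl H (u @ zword n)) N"
    using INIT[OF nc] b N by metis
  moreover have "drop (length (u @ zword n) - 2) (u @ zword n) = [id (n-1), id n]"
    unfolding zword_perm using last2_perm n3 by simp
  moreover have "n \<le> length (u @ zword n)" by (simp add: zword_perm)
  ultimately show ?thesis unfolding Inv_def N_def using idH by (metis id_apply)
qed

lemma Inv_step:
  assumes g: "gp n H" and lc: "long_cycle n \<notin> H" and n3: "3 \<le> n"
    and st: "step n H W W'" and I: "Inv n H W"
  shows "Inv n H W'"
proof -
  obtain x y \<sigma> \<tau> where s: "\<sigma> \<in> H" "\<tau> \<in> H" "W = x @ perm_word n \<sigma> @ y" "W' = x @ perm_word n \<tau> @ y"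
    using st unfolding step_def by blast
  have nc: "\<not> isper (pat H) (n-1) 1" using nonconst[OF g lc n3] .
  have len: "length W' = length W" using s by simp
  define N where "N = length W - 1"
  have LW: "length W = length x + n + length y" using s by simp
  have nSm: "Suc (n-1) = n" using n3 by simp
  have occ: "blk (pat H) (n-1) (dl H W) (length x) (length x + Suc (n-1))"
    using win_blk[OF g s(1), of x y] n3 s(3) nSm by simp
  have ch: "\<forall>p. p \<noteq> length x \<longrightarrow> p \<noteq> length x + Suc (n-1) \<longrightarrow> dl H W' p = dl H W p"
    using win_chg[OF g s(1) s(2)] s(3,4) nSm by simp
  have aN: "length x + Suc (n-1) \<le> Suc N" unfolding N_def using LW nSm n3 by linarith
  have nd: "\<not> danger (pat H) (n-1) (dl H W) N" using I unfolding Inv_def N_def by blast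
  have nd': "\<not> danger (pat H) (n-1) (dl H W') N"
    using CLO[OF nc occ ch aN] nd by blast
  have last: "\<exists>\<rho>\<in>H. drop (length W' - 2) W' = [\<rho> (n-1), \<rho> n]"
  proof (cases "length y")
    case 0
    hence "y = []" by simp
    then show ?thesis using s(2,4) last2_perm[of n x \<tau>] n3 by auto
  next
    case (Suc k)
    show ?thesis
    proof (cases k)
      case 0
      have a1: "Suc (n-1) \<le> N" "N - Suc (n-1) = length x" "N = length x + n"
        unfolding N_def using LW Suc 0 nSm n3 by linarith+
      have "blk (pat H) (n-1) (dl H W) (length x) (length x + n)"
        using win_blk[OF g s(1), of x y] n3 s(3) by simp
      hence "blk (pat H) (n-1) (dl H W) (N - Suc (n-1)) N" using a1 by simp
      hence "danger (pat H) (n-1) (dl H W) N"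
        using NOEND[of "pat H" "n-1" "dl H W" N] a1(1) by blast
      then show ?thesis using nd by blast
    next
      case (Suc k')
      have ge: "2 \<le> length y" using \<open>length y = Suc k\<close> Suc by simp
      have d1: "drop (length W - 2) W = drop (length y - 2) y"
        using s(3) ge by (simp add: add.commute)
      have d2: "drop (length W' - 2) W' = drop (length y - 2) y"
        using s(4) ge by (simp add: add.commute)
      obtain \<rho> where "\<rho> \<in> H" "drop (length W - 2) W = [\<rho> (n-1), \<rho> n]" using I unfolding Inv_def by blast
      then show ?thesis using d1 d2 by auto
    qed
  qed
  show ?thesis unfolding Inv_def using len nd' last I unfolding N_def Inv_def by simp
qed

lemma main_i:
  assumes g: "gp n H" and lc: "long_cycle n \<notin> H" and n3: "3 \<le> n"
    and eq: "Sn_eq n H (w @ [i, j]) (u @ zword n)"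
  shows "[i, j] \<in> setA n H"
proof -
  have idH: "id \<in> H" using g unfolding gp_def by blast
  have "(step n H)\<^sup>*\<^sup>* (u @ zword n) (w @ [i,j])"
    using Sn_eq_steps[OF idH eq] steps_sym by metis
  hence "Inv n H (w @ [i,j])"
  proof (induction rule: rtranclp_induct)
    case base then show ?case using Inv_init[OF g lc n3] .
  next
    case (step y z) then show ?case using Inv_step[OF g lc n3] by blast
  qed
  then obtain \<sigma> where "\<sigma> \<in> H" "drop (length (w @ [i,j]) - 2) (w @ [i,j]) = [\<sigma> (n-1), \<sigma> n]"
    unfolding Inv_def by blast
  then show ?thesis unfolding setA_def by auto
qed



lemma gp_of_subgroup:
  assumes sg: "subgroup H (sym_group n)" and ab: "\<forall>\<sigma>\<in>H. \<forall>\<tau>\<in>H. \<sigma> \<circ> \<tau> = \<tau> \<circ> \<sigma>"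
  shows "gp n H"
proof -
  interpret G: group "sym_group n" by (rule sym_group_is_group)
  have sub: "\<forall>\<sigma>\<in>H. \<sigma> permutes {1..n}" using subgroup.subset[OF sg] sym_group_carrier by blast
  have idH: "id \<in> H" using subgroup.one_closed[OF sg] sym_group_one by metis
  have cl: "\<forall>\<sigma>\<in>H. \<forall>\<tau>\<in>H. \<sigma>\<circ>\<tau> \<in> H" using subgroup.m_closed[OF sg] sym_group_mult by metis
  have iv: "\<forall>\<sigma>\<in>H. \<exists>\<sigma>'\<in>H. \<sigma>'\<circ>\<sigma> = id"
  proof
    fix \<sigma> assume s: "\<sigma> \<in> H"
    have c: "\<sigma> \<in> carrier (sym_group n)" using s subgroup.subset[OF sg] by blast
    have "inv\<^bsub>sym_group n\<^esub> \<sigma> \<in> H" using subgroup.m_inv_closed[OF sg s] .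
    moreover have "inv\<^bsub>sym_group n\<^esub> \<sigma> \<otimes>\<^bsub>sym_group n\<^esub> \<sigma> = \<one>\<^bsub>sym_group n\<^esub>" using G.l_inv[OF c] .
    ultimately show "\<exists>\<sigma>'\<in>H. \<sigma>'\<circ>\<sigma> = id" using sym_group_mult sym_group_one by metis
  qed
  show ?thesis unfolding gp_def using sub idH cl iv ab by blast
qed

definition rf :: "nat \<Rightarrow> nat \<Rightarrow> nat" where
  "rf n i = (if 1 \<le> i \<and> i \<le> n then Suc n - i else i)"

lemma rf_rf [simp]: "rf n (rf n i) = i"
  unfolding rf_def by auto

lemma rf_comp: "rf n \<circ> rf n = id"
  by (rule ext) simp

lemma rf_permutes: "rf n permutes {1..n}"
  unfolding permutes_def
proof (intro conjI allI impI)
  fix x assume "x \<notin> {1..n}" then show "rf n x = x" unfolding rf_def by auto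
next
  fix y show "\<exists>!x. rf n x = y"
  proof
    show "rf n (rf n y) = y" by simp
    fix x assume "rf n x = y" then show "x = rf n y" by (metis rf_rf)
  qed
qed

definition conjH :: "nat \<Rightarrow> (nat \<Rightarrow> nat) set \<Rightarrow> (nat \<Rightarrow> nat) set" where
  "conjH n H = (\<lambda>\<sigma>. rf n \<circ> \<sigma> \<circ> rf n) ` H"

lemma conj_comp: "(rf n \<circ> \<sigma> \<circ> rf n) \<circ> (rf n \<circ> \<tau> \<circ> rf n) = rf n \<circ> (\<sigma> \<circ> \<tau>) \<circ> rf n"
  by (rule ext) simp

lemma gp_conj:
  assumes g: "gp n H"
  shows "gp n (conjH n H)"
proof -
  have p: "\<forall>\<sigma>\<in>H. \<sigma> permutes {1..n}" and idH: "id \<in> H" and cl: "\<forall>\<sigma>\<in>H. \<forall>\<tau>\<in>H. \<sigma>\<circ>\<tau> \<in> H"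
    and iv: "\<forall>\<sigma>\<in>H. \<exists>\<sigma>'\<in>H. \<sigma>'\<circ>\<sigma> = id" and ab: "\<forall>\<sigma>\<in>H. \<forall>\<tau>\<in>H. \<sigma>\<circ>\<tau> = \<tau>\<circ>\<sigma>"
    using g unfolding gp_def by blast+
  have 1: "\<forall>\<sigma>\<in>conjH n H. \<sigma> permutes {1..n}"
    unfolding conjH_def using p rf_permutes permutes_compose by blast
  have "rf n \<circ> id \<circ> rf n = id" using rf_comp by simp
  hence 2: "id \<in> conjH n H" unfolding conjH_def using idH by (metis image_eqI)
  have 3: "\<forall>\<sigma>\<in>conjH n H. \<forall>\<tau>\<in>conjH n H. \<sigma>\<circ>\<tau> \<in> conjH n H"
    unfolding conjH_def using cl conj_comp by (smt (verit) image_iff)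
  have 4: "\<forall>\<sigma>\<in>conjH n H. \<exists>\<sigma>'\<in>conjH n H. \<sigma>'\<circ>\<sigma> = id"
  proof
    fix s assume "s \<in> conjH n H"
    then obtain \<sigma> where s: "\<sigma> \<in> H" "s = rf n \<circ> \<sigma> \<circ> rf n" unfolding conjH_def by blast
    obtain \<sigma>' where "\<sigma>' \<in> H" "\<sigma>' \<circ> \<sigma> = id" using iv s by blast
    moreover have "(rf n \<circ> \<sigma>' \<circ> rf n) \<circ> s = rf n \<circ> (\<sigma>' \<circ> \<sigma>) \<circ> rf n" using s conj_comp by simp
    ultimately show "\<exists>\<sigma>'\<in>conjH n H. \<sigma>'\<circ>s = id" unfolding conjH_def using rf_comp by (metis comp_id image_eqI)
  qed
  have 5: "\<forall>\<sigma>\<in>conjH n H. \<forall>\<tau>\<in>conjH n H. \<sigma>\<circ>\<tau> = \<tau>\<circ>\<sigma>"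
    unfolding conjH_def using ab conj_comp by (smt (verit) image_iff)
  show ?thesis unfolding gp_def using 1 2 3 4 5 by blast
qed

definition cinv :: "nat \<Rightarrow> nat \<Rightarrow> nat" where
  "cinv n i = (if 2 \<le> i \<and> i \<le> n then i - 1 else if i = 1 then n else i)"

lemma cinv_lc: "3 \<le> n \<Longrightarrow> cinv n \<circ> long_cycle n = id"
  by (rule ext) (auto simp: cinv_def long_cycle_def)

lemma rf_lc: "3 \<le> n \<Longrightarrow> rf n \<circ> long_cycle n \<circ> rf n = cinv n"
  by (rule ext) (auto simp: cinv_def long_cycle_def rf_def)

lemma lc_conj:
  assumes g: "gp n H" and lc: "long_cycle n \<notin> H" and n3: "3 \<le> n"
  shows "long_cycle n \<notin> conjH n H"
proof
  assume "long_cycle n \<in> conjH n H"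
  then obtain \<sigma> where s: "\<sigma> \<in> H" "long_cycle n = rf n \<circ> \<sigma> \<circ> rf n" unfolding conjH_def by blast
  have "rf n \<circ> long_cycle n \<circ> rf n = \<sigma>" using s(2) by (simp add: fun_eq_iff)
  hence sc: "\<sigma> = cinv n" using rf_lc[OF n3] by simp
  obtain \<sigma>' where s': "\<sigma>' \<in> H" "\<sigma>' \<circ> \<sigma> = id" using g s(1) unfolding gp_def by blast
  have "\<sigma>' = \<sigma>' \<circ> (cinv n \<circ> long_cycle n)" using cinv_lc[OF n3] by simp
  also have "\<dots> = (\<sigma>' \<circ> \<sigma>) \<circ> long_cycle n" using sc by (simp add: comp_assoc)
  also have "\<dots> = long_cycle n" using s'(2) by simp
  finally show False using s'(1) lc by simp
qed

lemma rev_perm: "map (rf n) (rev (perm_word n \<sigma>)) = perm_word n (rf n \<circ> \<sigma> \<circ> rf n)"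
proof (rule nth_equalityI)
  show "length (map (rf n) (rev (perm_word n \<sigma>))) = length (perm_word n (rf n \<circ> \<sigma> \<circ> rf n))" by simp
  fix i assume "i < length (map (rf n) (rev (perm_word n \<sigma>)))"
  hence i: "i < n" by simp
  have "map (rf n) (rev (perm_word n \<sigma>)) ! i = rf n (perm_word n \<sigma> ! (n - Suc i))"
    using i by (simp add: rev_nth)
  also have "\<dots> = rf n (\<sigma> (n - i))" using i perm_word_nth[of "n - Suc i" n \<sigma>] by (simp add: Suc_diff_Suc)
  also have "\<dots> = (rf n \<circ> \<sigma> \<circ> rf n) (Suc i)" using i unfolding rf_def by simp
  also have "\<dots> = perm_word n (rf n \<circ> \<sigma> \<circ> rf n) ! i" using perm_word_nth[OF i] by simp
  finally show "map (rf n) (rev (perm_word n \<sigma>)) ! i = perm_word n (rf n \<circ> \<sigma> \<circ> rf n) ! i" .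
qed

lemma rev_zword: "map (rf n) (rev (zword n)) = zword n"
  using rev_perm[of n id] rf_comp[of n] by (simp add: zword_perm)

lemma Sn_eq_rev:
  "Sn_eq n H u v \<Longrightarrow> Sn_eq n (conjH n H) (map (rf n) (rev u)) (map (rf n) (rev v))"
proof (induction rule: Sn_eq.induct)
  case (rel \<sigma> u v)
  have "rf n \<circ> \<sigma> \<circ> rf n \<in> conjH n H" unfolding conjH_def using rel by blast
  hence "Sn_eq n (conjH n H) (map (rf n) (rev v) @ zword n @ map (rf n) (rev u))
     (map (rf n) (rev v) @ perm_word n (rf n \<circ> \<sigma> \<circ> rf n) @ map (rf n) (rev u))"
    by (rule Sn_eq.rel)
  then show ?case using rev_perm[of n \<sigma>] rev_zword[of n] by simp
next
  case (refl u) then show ?case by (rule Sn_eq.refl)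
next
  case (sym u v) then show ?case using Sn_eq.sym by blast
next
  case (trans u v w) then show ?case using Sn_eq.trans by blast
qed

lemma main_ii:
  assumes g: "gp n H" and lc: "long_cycle n \<notin> H" and n3: "3 \<le> n"
    and eq: "Sn_eq n H ([i, j] @ v) (zword n @ u)"
  shows "[i, j] \<in> setA_tilde H"
proof -
  have "Sn_eq n (conjH n H) (map (rf n) (rev v) @ [rf n j, rf n i]) (map (rf n) (rev u) @ zword n)"
    using Sn_eq_rev[OF eq] rev_zword[of n] by simp
  hence "[rf n j, rf n i] \<in> setA n (conjH n H)"
    using main_i[OF gp_conj[OF g] lc_conj[OF g lc n3] n3] by blast
  then obtain \<sigma> where s: "\<sigma> \<in> H" "rf n j = rf n (\<sigma> (rf n (n-1)))" "rf n i = rf n (\<sigma> (rf n n))"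
    unfolding setA_def conjH_def by auto
  have "rf n (n-1) = 2" "rf n n = 1" using n3 unfolding rf_def by auto
  hence "j = \<sigma> 2" "i = \<sigma> 1" using s by (metis rf_rf)+
  then show ?thesis unfolding setA_tilde_def using s(1) by blast
qed



lemma lc1: "long_cycle 1 = id"
  by (rule ext) (simp add: long_cycle_def)

lemma H2_id:
  assumes g: "gp 2 H" and lc: "long_cycle 2 \<notin> H" and s: "\<sigma> \<in> H"
  shows "\<sigma> = id"
proof -
  have p: "\<sigma> permutes {1..2}" using g s unfolding gp_def by blast
  have out: "\<sigma> x = x" if "x \<notin> {1..2}" for x using permutes_not_in[OF p that] .
  have s1: "\<sigma> 1 \<in> {1..2}" "\<sigma> 2 \<in> {1..2}" using permutes_in_image[OF p] by auto
  have inj: "\<sigma> 1 \<noteq> \<sigma> 2"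
  proof
    assume "\<sigma> 1 = \<sigma> 2"
    hence "(1::nat) = 2" using permutes_inj[OF p] by (meson injD)
    then show False by simp
  qed
  show ?thesis
  proof (cases "\<sigma> 1 = 1")
    case True
    hence "\<sigma> 2 = 2" using s1 inj by auto
    then show ?thesis using True out by (intro ext) (metis atLeastAtMost_iff id_apply le_antisym not_less_eq_eq one_add_one Suc_1 le_SucE)
  next
    case False
    hence a: "\<sigma> 1 = 2" "\<sigma> 2 = 1" using s1 inj by auto
    have "\<sigma> = long_cycle 2"
    proof
      fix x
      show "\<sigma> x = long_cycle 2 x"
      proof (cases "x \<in> {1..2}")
        case True
        hence "x = 1 \<or> x = 2" by auto
        then show ?thesis using a unfolding long_cycle_def by auto
      next
        case False
        then show ?thesis using out unfolding long_cycle_def by auto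
      qed
    qed
    then show ?thesis using lc s by simp
  qed
qed

lemma Sn_eq_trivial:
  assumes "\<forall>\<sigma>\<in>H. \<sigma> = id"
  shows "Sn_eq n H u v \<Longrightarrow> u = v"
  by (induction rule: Sn_eq.induct) (use assms in \<open>auto simp: zword_perm\<close>)

theorem lemma2p2:
  fixes n :: nat and H :: "(nat \<Rightarrow> nat) set"
  assumes "subgroup H (sym_group n)"
    and "\<forall>\<sigma>\<in>H. \<forall>\<tau>\<in>H. \<sigma> \<circ> \<tau> = \<tau> \<circ> \<sigma>"
    and "long_cycle n \<notin> H"
  shows "(stab H n = {id} \<longrightarrow>
            (\<forall>w \<in> FM n. \<forall>i\<in>{1..n}. \<forall>j\<in>{1..n}.
               in_Sz n H (w @ [i, j]) \<longrightarrow> [i, j] \<in> setA n H))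
       \<and> (stab H 1 = {id} \<longrightarrow>
            (\<forall>v \<in> FM n. \<forall>i\<in>{1..n}. \<forall>j\<in>{1..n}.
               in_zS n H ([i, j] @ v) \<longrightarrow> [i, j] \<in> setA_tilde H))"
proof -
  have g: "gp n H" using gp_of_subgroup assms(1,2) by blast
  have idH: "id \<in> H" using g unfolding gp_def by blast
  have lc: "long_cycle n \<notin> H" using assms(3) .
  consider "n = 0" | "n = 1" | "n = 2" | "3 \<le> n" by linarith
  then show ?thesis
  proof cases
    case 1 then show ?thesis by simp
  next
    case 2 then show ?thesis using lc idH lc1 by simp
  next
    case 3
    have triv: "\<forall>\<sigma>\<in>H. \<sigma> = id" using H2_id g lc 3 by blast
    have z2: "zword 2 = [1,2]" unfolding zword_def by (simp add: numeral_2_eq_2)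
    have "[id (2-1), id 2] \<in> setA 2 H" unfolding setA_def using idH by blast
    hence A: "[1,2] \<in> setA 2 H" by simp
    have "[id 1, id 2] \<in> setA_tilde H" unfolding setA_tilde_def using idH by blast
    hence At: "[1,2] \<in> setA_tilde H" by simp
    show ?thesis
    proof (intro conjI impI ballI)
      fix w i j assume "in_Sz n H (w @ [i, j])"
      then obtain u where "Sn_eq n H (w @ [i,j]) (u @ zword n)" unfolding in_Sz_def by blast
      hence "w @ [i,j] = u @ zword n" using Sn_eq_trivial[OF triv] by blast
      hence "w @ [i,j] = u @ [1,2]" using 3 z2 by simp
      hence "[i,j] = [1,2]" by simp
      then show "[i, j] \<in> setA n H" using A 3 by simp
    next
      fix v i j assume "in_zS n H ([i, j] @ v)"
      then obtain u where "Sn_eq n H ([i,j] @ v) (zword n @ u)" unfolding in_zS_def by blast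
      hence "[i,j] @ v = zword n @ u" using Sn_eq_trivial[OF triv] by blast
      hence "[i,j] @ v = [1,2] @ u" using 3 z2 by simp
      hence "[i,j] = [1,2]" by simp
      then show "[i, j] \<in> setA_tilde H" using At by simp
    qed
  next
    case 4
    show ?thesis
    proof (intro conjI impI ballI)
      fix w i j assume "in_Sz n H (w @ [i, j])"
      then obtain u where "Sn_eq n H (w @ [i,j]) (u @ zword n)" unfolding in_Sz_def by blast
      then show "[i, j] \<in> setA n H" using main_i[OF g lc 4] by blast
    next
      fix v i j assume "in_zS n H ([i, j] @ v)"
      then obtain u where "Sn_eq n H ([i,j] @ v) (zword n @ u)" unfolding in_zS_def by blast
      then show "[i, j] \<in> setA_tilde H" using main_ii[OF g lc 4] by blast
    qed
  qed
qed


end
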